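(* For $f_0\ge 1$ define $$\beta(f_0)=\frac12\int_{\phi_*(f_0)}^{\phi^*(f_0)}\frac{d\phi}{\sqrt{f_0-f(\phi)}}.$$ Then $\beta$ is a smooth function mapping $(1,\infty)$ bijectively onto $(\pi/\sqrt2,\infty)$, and $\frac{d\beta}{df_0}>0$ on $(1,\infty)$.
   Context: Let $f(\phi)=e^\phi-\phi$ for $\phi\in\mathbb R$; $f$ maps $\mathbb R$ onto $[1,\infty)$. For $f_1\ge1$, $\phi_*(f_1)\le0$ and $\phi^*(f_1)\ge0$ denote the two solutions $\phi$ of $f(\phi)=f_1$ (they coincide, equal to $0$, when $f_1=1$). *)

theory Defs
  imports "HOL-Analysis.Analysis"
begin

definition ff :: "real \<Rightarrow> real" where
  "ff \<phi> = exp \<phi> - \<phi>"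

definition phi_lo :: "real \<Rightarrow> real" where
  "phi_lo f1 = (THE \<phi>. \<phi> \<le> 0 \<and> ff \<phi> = f1)"

definition phi_hi :: "real \<Rightarrow> real" where
  "phi_hi f1 = (THE \<phi>. \<phi> \<ge> 0 \<and> ff \<phi> = f1)"

text \<open>beta(f0) = 1/2 * integral over [phi_lo f0, phi_hi f0] of 1/sqrt(f0 - ff phi)
  (improper at the endpoints; taken as the Henstock-Kurzweil integral on the closed interval).\<close>
definition beta :: "real \<Rightarrow> real" where
  "beta f0 = 1/2 * integral {phi_lo f0..phi_hi f0} (\<lambda>\<phi>. 1 / sqrt (f0 - ff \<phi>))"

end

theory Submission
  imports Defs "HOL-Analysis.Analysis"
begin


fun Cn :: "nat \<Rightarrow> real set \<Rightarrow> (real \<Rightarrow> real) \<Rightarrow> bool" where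
  "Cn 0 S f = continuous_on S f"
| "Cn (Suc n) S f = (continuous_on S f \<and> (\<exists>f'. (\<forall>x\<in>S. (f has_real_derivative f' x) (at x)) \<and> Cn n S f'))"

lemma Cn_cont: "Cn n S f \<Longrightarrow> continuous_on S f"
  by (cases n) auto

lemma Cn_mono: "Cn (Suc n) S f \<Longrightarrow> Cn n S f"
proof (induction n arbitrary: f)
  case 0 then show ?case by simp
next
  case (Suc n)
  then show ?case by (metis Cn.simps(2))
qed

lemma Cn_le: "m \<le> n \<Longrightarrow> Cn n S f \<Longrightarrow> Cn m S f"
  by (induction n rule: dec_induct) (metis Cn_mono)+

lemma Cn_cong: "open S \<Longrightarrow> (\<And>x. x \<in> S \<Longrightarrow> f x = g x) \<Longrightarrow> Cn n S f \<Longrightarrow> Cn n S g"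
proof (cases n)
  case 0
  assume "open S" "\<And>x. x \<in> S \<Longrightarrow> f x = g x" "Cn n S f"
  then show ?thesis using 0 continuous_on_eq by (metis Cn.simps(1))
next
  case (Suc m)
  assume S: "open S" and eq: "\<And>x. x \<in> S \<Longrightarrow> f x = g x" and C: "Cn n S f"
  then obtain f' where d: "\<forall>x\<in>S. (f has_real_derivative f' x) (at x)" and c: "Cn m S f'" and cf: "continuous_on S f"
    using Suc by auto
  have "\<forall>x\<in>S. (g has_real_derivative f' x) (at x)"
    using d eq S by (metis has_field_derivative_transform_within_open)
  moreover have "continuous_on S g" using cf eq by (rule continuous_on_eq)
  ultimately show ?thesis using Suc c by auto
qed

lemma Cn_subset: "T \<subseteq> S \<Longrightarrow> Cn n S f \<Longrightarrow> Cn n T f"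
proof (induction n arbitrary: f)
  case 0 then show ?case using continuous_on_subset by auto
next
  case (Suc n)
  then obtain f' where "\<forall>x\<in>S. (f has_real_derivative f' x) (at x)" "Cn n S f'" "continuous_on S f" by auto
  then show ?case using Suc.IH[of f'] Suc.prems(1) continuous_on_subset by auto
qed

lemma Cn_const: "Cn n S (\<lambda>x. c)"
proof (induction n arbitrary: c)
  case 0 then show ?case by simp
next
  case (Suc n) then show ?case by (auto intro!: exI[of _ "\<lambda>x. 0"] derivative_eq_intros)
qed

lemma Cn_id: "Cn n S (\<lambda>x. x)"
proof (cases n)
  case 0 then show ?thesis by (simp add: continuous_on_id)
next
  case (Suc m) then show ?thesis by (auto intro!: exI[of _ "\<lambda>x. 1"] derivative_eq_intros Cn_const continuous_on_id)
qed

lemma Cn_add: "Cn n S f \<Longrightarrow> Cn n S g \<Longrightarrow> Cn n S (\<lambda>x. f x + g x)"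
proof (induction n arbitrary: f g)
  case 0 then show ?case by (auto intro: continuous_on_add)
next
  case (Suc n)
  then obtain f' g' where "\<forall>x\<in>S. (f has_real_derivative f' x) (at x)" "Cn n S f'"
    "\<forall>x\<in>S. (g has_real_derivative g' x) (at x)" "Cn n S g'" "continuous_on S f" "continuous_on S g" by auto
  then show ?case using Suc.IH
    by (auto intro!: exI[of _ "\<lambda>x. f' x + g' x"] derivative_eq_intros continuous_on_add)
qed

lemma Cn_mult: "Cn n S f \<Longrightarrow> Cn n S g \<Longrightarrow> Cn n S (\<lambda>x. f x * g x)"
proof (induction n arbitrary: f g)
  case 0 then show ?case by (auto intro: continuous_on_mult)
next
  case (Suc n)
  then obtain f' g' where a: "\<forall>x\<in>S. (f has_real_derivative f' x) (at x)" "Cn n S f'"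
    "\<forall>x\<in>S. (g has_real_derivative g' x) (at x)" "Cn n S g'" "continuous_on S f" "continuous_on S g" by auto
  have "Cn n S f" "Cn n S g" using Suc.prems Cn_mono by blast+
  then have "Cn n S (\<lambda>x. f' x * g x + f x * g' x)" using Suc.IH a Cn_add by blast
  then show ?case using a
    by (auto intro!: exI[of _ "\<lambda>x. f' x * g x + f x * g' x"] derivative_eq_intros continuous_on_mult)
qed

lemma Cn_compose: "Cn n T f \<Longrightarrow> Cn n S g \<Longrightarrow> g ` S \<subseteq> T \<Longrightarrow> Cn n S (\<lambda>x. f (g x))"
proof (induction n arbitrary: f g)
  case 0 then show ?case using continuous_on_compose2 by (metis Cn.simps(1))
next
  case (Suc n)
  then obtain f' g' where a: "\<forall>x\<in>T. (f has_real_derivative f' x) (at x)" "Cn n T f'"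
    "\<forall>x\<in>S. (g has_real_derivative g' x) (at x)" "Cn n S g'" "continuous_on T f" "continuous_on S g" by auto
  have "Cn n S g" using Suc.prems Cn_mono by blast
  then have "Cn n S (\<lambda>x. f' (g x))" using Suc.IH a Suc.prems by blast
  then have "Cn n S (\<lambda>x. f' (g x) * g' x)" using a Cn_mult by blast
  moreover have "\<forall>x\<in>S. ((\<lambda>x. f (g x)) has_real_derivative f' (g x) * g' x) (at x)"
  proof
    fix x assume x: "x \<in> S"
    have gx: "g x \<in> T" using Suc.prems(3) x by auto
    show "((\<lambda>x. f (g x)) has_real_derivative f' (g x) * g' x) (at x)"
      using DERIV_chain2[OF a(1)[rule_format, OF gx] a(3)[rule_format, OF x]] .
  qed
  moreover have "continuous_on S (\<lambda>x. f (g x))" using a Suc.prems continuous_on_compose2 by blast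
  ultimately show ?case by auto
qed

lemma Cn_inverse: "Cn n S f \<Longrightarrow> (\<And>x. x \<in> S \<Longrightarrow> f x \<noteq> 0) \<Longrightarrow> Cn n S (\<lambda>x. inverse (f x))"
proof (induction n arbitrary: f)
  case 0 then show ?case by (auto intro: continuous_on_inverse)
next
  case (Suc n)
  then obtain f' where a: "\<forall>x\<in>S. (f has_real_derivative f' x) (at x)" "Cn n S f'" "continuous_on S f" by auto
  have "Cn n S f" using Suc.prems Cn_mono by blast
  then have i: "Cn n S (\<lambda>x. inverse (f x))" using Suc.IH Suc.prems by blast
  have "Cn n S (\<lambda>x. (- 1) * (f' x * (inverse (f x) * inverse (f x))))"
    using Cn_mult[OF Cn_const] Cn_mult[OF a(2) Cn_mult[OF i i]] by blast
  moreover have "\<forall>x\<in>S. ((\<lambda>x. inverse (f x)) has_real_derivative (- 1) * (f' x * (inverse (f x) * inverse (f x)))) (at x)"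
    using a Suc.prems by (auto intro!: derivative_eq_intros simp: field_simps power2_eq_square)
  moreover have "continuous_on S (\<lambda>x. inverse (f x))" using a Suc.prems by (auto intro: continuous_on_inverse)
  ultimately show ?case by auto
qed

lemma Cn_exp: "Cn n S exp"
proof (induction n)
  case 0 then show ?case by (simp add: continuous_on_exp continuous_on_id)
next
  case (Suc n) then show ?case by (auto intro!: exI[of _ exp] DERIV_exp continuous_on_exp continuous_on_id)
qed

lemma Cn_sqrt: "Cn n {0<..} sqrt"
proof (induction n)
  case 0 then show ?case by (simp add: continuous_on_real_sqrt continuous_on_id)
next
  case (Suc n)
  have c2: "Cn n {0<..} (\<lambda>x. 2 * sqrt x)" using Cn_mult[OF Cn_const Suc.IH] .
  have "Cn n {0<..} (\<lambda>x. inverse (2 * sqrt x))"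
    by (rule Cn_inverse[OF c2]) auto
  then show ?case by (auto intro!: exI[of _ "\<lambda>x. inverse (2 * sqrt x)"] DERIV_real_sqrt continuous_on_real_sqrt continuous_on_id)
qed

lemma Cn_deriv: "open S \<Longrightarrow> Cn (Suc n) S f \<Longrightarrow> Cn n S (deriv f) \<and> (\<forall>x\<in>S. (f has_real_derivative deriv f x) (at x))"
proof -
  assume S: "open S" and C: "Cn (Suc n) S f"
  then obtain f' where d: "\<forall>x\<in>S. (f has_real_derivative f' x) (at x)" and c: "Cn n S f'" by auto
  have e: "\<And>x. x \<in> S \<Longrightarrow> f' x = deriv f x" using d DERIV_imp_deriv by metis
  show ?thesis using Cn_cong[OF S e c] d e by auto
qed

lemma Cn_higher: "open S \<Longrightarrow> Cn (Suc n) S f \<Longrightarrow> x \<in> S \<Longrightarrow> ((deriv ^^ n) f) differentiable (at x)"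
proof (induction n arbitrary: f)
  case 0
  then obtain f' where "(f has_real_derivative f' x) (at x)" by auto
  then show ?case by (auto simp: real_differentiable_def)
next
  case (Suc n)
  have "Cn (Suc n) S (deriv f)" using Cn_deriv[OF Suc.prems(1,2)] by blast
  then have "((deriv ^^ n) (deriv f)) differentiable (at x)" using Suc by blast
  then show ?case by (simp add: funpow_Suc_right del: funpow.simps)
qed



lemma param_int_cont:
  fixes g w s :: "real \<Rightarrow> real"
  assumes g: "continuous_on UNIV g" and w: "continuous_on {c..d} w" and s: "continuous_on {c..d} s"
  shows "continuous_on UNIV (\<lambda>x. integral {c..d} (\<lambda>t. w t * g (x * s t)))"
proof -
  have "continuous_on (UNIV \<times> cbox c d) (\<lambda>(x, t). w t * g (x * s t))"
  proof -
    have 1: "continuous_on (UNIV \<times> {c..d}) (\<lambda>p. w (snd p))"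
      by (rule continuous_on_compose2[OF w]) (auto intro: continuous_intros)
    have 2: "continuous_on (UNIV \<times> {c..d}) (\<lambda>p. s (snd p))"
      by (rule continuous_on_compose2[OF s]) (auto intro: continuous_intros)
    have 3: "continuous_on (UNIV \<times> {c..d}) (\<lambda>p. g (fst p * s (snd p)))"
      by (rule continuous_on_compose2[OF g]) (use continuous_on_mult[OF continuous_on_fst[OF continuous_on_id] 2] in auto)
    show ?thesis unfolding split_beta cbox_interval using continuous_on_mult[OF 1 3] by simp
  qed
  then show ?thesis using integral_continuous_on_param[of UNIV c d "\<lambda>x t. w t * g (x * s t)"]
    by (simp add: cbox_interval)
qed

lemma param_int_deriv:
  fixes g g' w s :: "real \<Rightarrow> real"
  assumes d: "\<And>x. (g has_real_derivative g' x) (at x)" and g': "continuous_on UNIV g'"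
    and w: "continuous_on {c..d} w" and s: "continuous_on {c..d} s"
  shows "((\<lambda>x. integral {c..d} (\<lambda>t. w t * g (x * s t))) has_real_derivative
           integral {c..d} (\<lambda>t. (w t * s t) * g' (x * s t))) (at x)"
proof -
  have g: "continuous_on UNIV g"
    by (intro continuous_at_imp_continuous_on ballI DERIV_isCont[OF d])
  have 1: "continuous_on (UNIV \<times> {c..d}) (\<lambda>p. w (snd p))"
    by (rule continuous_on_compose2[OF w]) (auto intro: continuous_intros)
  have 2: "continuous_on (UNIV \<times> {c..d}) (\<lambda>p. s (snd p))"
    by (rule continuous_on_compose2[OF s]) (auto intro: continuous_intros)
  have 3: "continuous_on (UNIV \<times> {c..d}) (\<lambda>p. g' (fst p * s (snd p)))"
    by (rule continuous_on_compose2[OF g']) (use continuous_on_mult[OF continuous_on_fst[OF continuous_on_id] 2] in auto)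
  have cfx: "continuous_on (UNIV \<times> cbox c d) (\<lambda>(x, t). w t * (g' (x * s t) * s t))"
    unfolding split_beta cbox_interval using continuous_on_mult[OF 1 continuous_on_mult[OF 3 2]] by simp
  have fx: "((\<lambda>x. w t * g (x * s t)) has_field_derivative w t * (g' (x * s t) * s t)) (at x within UNIV)" for x t
  proof -
    have "((\<lambda>x. x * s t) has_real_derivative s t) (at x)"
      by (auto intro!: derivative_eq_intros)
    from DERIV_cmult[OF DERIV_chain2[OF d this], of "w t"] show ?thesis by simp
  qed
  have int: "(\<lambda>t. w t * g (x * s t)) integrable_on cbox c d" for x
  proof -
    have "continuous_on {c..d} (\<lambda>t. g (x * s t))"
      by (rule continuous_on_compose2[OF g]) (auto intro: continuous_intros s)
    then show ?thesis unfolding cbox_interval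
      by (intro integrable_continuous_interval continuous_on_mult w)
  qed
  have L: "((\<lambda>x. integral (cbox c d) (\<lambda>t. w t * g (x * s t))) has_field_derivative
          integral (cbox c d) (\<lambda>t. w t * (g' (x * s t) * s t))) (at x within UNIV)"
    apply (rule leibniz_rule_field_derivative[where f="\<lambda>x t. w t * g (x * s t)" and fx="\<lambda>x t. w t * (g' (x * s t) * s t)" and U=UNIV and a=c and b=d])
        apply (rule fx)
       apply (rule int)
      apply (rule cfx)
     apply simp
    apply simp
    done
  have eq: "(\<lambda>t. w t * (g' (x * s t) * s t)) = (\<lambda>t. (w t * s t) * g' (x * s t))"
    by (simp add: ac_simps)
  show ?thesis using L unfolding eq cbox_interval .
qed

lemma Cn_param:
  fixes g w s :: "real \<Rightarrow> real"
  assumes "Cn (Suc n) UNIV g" "continuous_on {c..d} w" "continuous_on {c..d} s"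
  shows "Cn n UNIV (\<lambda>x. integral {c..d} (\<lambda>t. w t * g (x * s t)))"
  using assms
proof (induction n arbitrary: g w)
  case 0
  have "continuous_on UNIV g" using 0 Cn_cont by blast
  then show ?case using param_int_cont[OF _ 0(2) 0(3)] by simp
next
  case (Suc n)
  then obtain g' where a: "\<forall>x. (g has_real_derivative g' x) (at x)" "Cn (Suc n) UNIV g'" "continuous_on UNIV g" by auto
  have ws: "continuous_on {c..d} (\<lambda>t. w t * s t)" using Suc.prems by (intro continuous_on_mult)
  have "Cn n UNIV (\<lambda>x. integral {c..d} (\<lambda>t. (w t * s t) * g' (x * s t)))"
    using Suc.IH[OF a(2) ws Suc.prems(3)] .
  moreover have "\<forall>x. ((\<lambda>x. integral {c..d} (\<lambda>t. w t * g (x * s t))) has_real_derivative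
           integral {c..d} (\<lambda>t. (w t * s t) * g' (x * s t))) (at x)"
    using param_int_deriv[OF _ Cn_cont[OF a(2)] Suc.prems(2,3)] a(1) by blast
  moreover have "continuous_on UNIV (\<lambda>x. integral {c..d} (\<lambda>t. w t * g (x * s t)))"
    using param_int_cont[OF a(3) Suc.prems(2,3)] .
  ultimately show ?case unfolding Cn.simps
    by (intro conjI exI[where x="\<lambda>x. integral {c..d} (\<lambda>t. w t * s t * g' (x * s t))"]) simp_all
qed



lemma exp_strict: "x \<noteq> (0::real) \<Longrightarrow> 1 + x < exp x"
proof -
  assume x: "x \<noteq> 0"
  have d: "\<And>z. DERIV (\<lambda>x. exp x - x) z :> exp z - 1" by (auto intro!: derivative_eq_intros)
  show ?thesis
  proof (cases "x > 0")
    case True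
    then obtain z where z: "0 < z" "z < x" "(exp x - x) - (exp 0 - 0) = (x - 0) * (exp z - 1)"
      using MVT2[of 0 x "\<lambda>x. exp x - x" "\<lambda>z. exp z - 1"] d by blast
    have "exp z > 1" using z by simp
    then have "(x - 0) * (exp z - 1) > 0" using True by simp
    then show ?thesis using z(3) by simp
  next
    case False
    then have xn: "x < 0" using x by simp
    then obtain z where z: "x < z" "z < 0" "(exp 0 - 0) - (exp x - x) = (0 - x) * (exp z - 1)"
      using MVT2[of x 0 "\<lambda>x. exp x - x" "\<lambda>z. exp z - 1"] d by blast
    have "exp z < 1" using z by simp
    then have "x * (exp z - 1) > 0" using xn by (intro mult_neg_neg) auto
    moreover have "(0 - x) * (exp z - 1) = - (x * (exp z - 1))" by simp
    ultimately show ?thesis using z(3) by simp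
  qed
qed

definition hh :: "real \<Rightarrow> real" where
  "hh x = integral {0..1} (\<lambda>t. (1 - t) * exp (x * t))"

lemma Cn_hh: "Cn n UNIV hh"
proof -
  have "Cn n UNIV (\<lambda>x. integral {0..1} (\<lambda>t. (1 - t) * exp (x * t)))"
    by (rule Cn_param[OF Cn_exp]) (auto intro: continuous_intros)
  then show ?thesis unfolding hh_def[abs_def] .
qed

lemma hh_eq: "x\<^sup>2 * hh x = exp x - x - 1"
proof (cases "x = 0")
  case True then show ?thesis by simp
next
  case False
  let ?A = "\<lambda>t. ((1 - t) / x + 1 / x\<^sup>2) * exp (x * t)"
  have "((\<lambda>t. (1 - t) * exp (x * t)) has_integral (?A 1 - ?A 0)) {0..1}"
  proof (rule fundamental_theorem_of_calculus)
    fix t :: real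
    have d1: "((\<lambda>t. (1 - t) / x + 1 / x\<^sup>2) has_real_derivative - 1 / x) (at t)"
      using False by (auto intro!: derivative_eq_intros simp: field_simps)
    have d2: "((\<lambda>t. exp (x * t)) has_real_derivative exp (x * t) * x) (at t)"
      by (auto intro!: derivative_eq_intros)
    have "(?A has_real_derivative (- 1 / x) * exp (x * t) + exp (x * t) * x * ((1 - t) / x + 1 / x\<^sup>2)) (at t)"
      by (rule DERIV_mult[OF d1 d2])
    moreover have "(- 1 / x) * exp (x * t) + exp (x * t) * x * ((1 - t) / x + 1 / x\<^sup>2) = (1 - t) * exp (x * t)"
      using False by (simp add: field_simps power2_eq_square)
    ultimately have "(?A has_real_derivative (1 - t) * exp (x * t)) (at t)" by simp
    then show "(?A has_vector_derivative (1 - t) * exp (x * t)) (at t within {0..1})"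
      by (simp add: has_real_derivative_iff_has_vector_derivative has_vector_derivative_at_within)
  qed simp
  then have "hh x = ?A 1 - ?A 0" unfolding hh_def by (rule integral_unique)
  then show ?thesis using False by (simp add: field_simps power2_eq_square)
qed

lemma hh_0: "hh 0 = 1/2"
proof -
  let ?A = "\<lambda>t::real. t - t\<^sup>2 / 2"
  have "((\<lambda>t. (1 - t) * exp (0 * t)) has_integral (?A 1 - ?A 0)) {0..1}"
  proof (rule fundamental_theorem_of_calculus)
    fix t :: real
    have "(?A has_real_derivative (1 - t) * exp (0 * t)) (at t)"
      by (rule derivative_eq_intros refl | simp)+
    then show "(?A has_vector_derivative (1 - t) * exp (0 * t)) (at t within {0..1})"
      by (simp add: has_real_derivative_iff_has_vector_derivative has_vector_derivative_at_within)
  qed simp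
  then have "hh 0 = ?A 1 - ?A 0" unfolding hh_def by (rule integral_unique)
  then show ?thesis by simp
qed

lemma hh_pos: "hh x > 0"
proof (cases "x = 0")
  case True then show ?thesis by (simp add: hh_0)
next
  case False
  have "x\<^sup>2 * hh x > 0" using hh_eq[of x] exp_strict[OF False] by simp
  then show ?thesis using False by (simp add: zero_less_mult_iff)
qed

definition uu :: "real \<Rightarrow> real" where
  "uu x = x * sqrt (2 * hh x)"

lemma Cn_q: "Cn n UNIV (\<lambda>x. sqrt (2 * hh x))"
  by (rule Cn_compose[OF Cn_sqrt Cn_mult[OF Cn_const Cn_hh]]) (auto intro: hh_pos)

lemma Cn_uu: "Cn n UNIV uu"
  unfolding uu_def[abs_def] by (rule Cn_mult[OF Cn_id Cn_q])

lemma uu_sq: "(uu x)\<^sup>2 = 2 * (exp x - x - 1)"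
proof -
  have "(uu x)\<^sup>2 = x\<^sup>2 * (2 * hh x)" unfolding uu_def using hh_pos[of x]
    by (simp add: power_mult_distrib)
  then show ?thesis using hh_eq[of x] by simp
qed

lemma uu_pos: "0 < x \<Longrightarrow> 0 < uu x" and uu_neg: "x < 0 \<Longrightarrow> uu x < 0" and uu_0: "uu 0 = 0"
  unfolding uu_def using hh_pos[of x] by (auto simp: mult_neg_pos)

definition u1 :: "real \<Rightarrow> real" where "u1 = deriv uu"

lemma Cn_u1: "Cn n UNIV u1" and DERIV_uu: "DERIV uu x :> u1 x"
  using Cn_deriv[OF open_UNIV Cn_uu[of "Suc n"]] unfolding u1_def by auto

lemma u1_0: "u1 0 = 1"
proof -
  let ?q = "\<lambda>x. sqrt (2 * hh x)"
  have dq: "DERIV ?q 0 :> deriv ?q 0" using Cn_deriv[OF open_UNIV Cn_q[of "Suc 0"]] by auto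
  have "DERIV (\<lambda>x. x * ?q x) 0 :> 1 * ?q 0 + deriv ?q 0 * 0"
    by (rule DERIV_mult[OF DERIV_ident dq])
  then have "DERIV uu 0 :> 1" unfolding uu_def[abs_def] by (simp add: hh_0)
  then show ?thesis using DERIV_uu DERIV_unique by blast
qed

lemma u1_rel: "u1 x * uu x = exp x - 1"
proof -
  have "DERIV (\<lambda>x. uu x * uu x) x :> u1 x * uu x + u1 x * uu x"
    by (rule DERIV_mult[OF DERIV_uu DERIV_uu])
  moreover have "(\<lambda>x. uu x * uu x) = (\<lambda>x. 2 * (exp x - x - 1))"
    using uu_sq by (auto simp: power2_eq_square)
  moreover have "DERIV (\<lambda>x. 2 * (exp x - x - 1)) x :> 2 * (exp x - 1)"
    by (auto intro!: derivative_eq_intros)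
  ultimately have "u1 x * uu x + u1 x * uu x = 2 * (exp x - 1)" using DERIV_unique by metis
  then show ?thesis by simp
qed

lemma u1_pos: "u1 x > 0"
proof -
  consider "x > 0" | "x < 0" | "x = 0" by linarith
  then show ?thesis
  proof cases
    case 1
    then have "u1 x * uu x > 0" using u1_rel[of x] by simp
    then show ?thesis using uu_pos[OF 1] by (simp add: zero_less_mult_iff)
  next
    case 2
    then have "u1 x * uu x < 0" using u1_rel[of x] by simp
    then show ?thesis using uu_neg[OF 2] by (simp add: mult_less_0_iff)
  next
    case 3 then show ?thesis using u1_0 by simp
  qed
qed

lemma uu_less: "x < y \<Longrightarrow> uu x < uu y"
  by (rule DERIV_pos_imp_increasing) (use DERIV_uu u1_pos in blast)+

lemma uu_inj: "uu x = uu y \<Longrightarrow> x = y"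
  by (metis linorder_neq_iff order_less_irrefl uu_less)

lemma cont_uu: "continuous_on S uu"
  using Cn_cont[OF Cn_uu[of 0]] continuous_on_subset by blast

lemma uu_surj: "\<exists>x. uu x = y"
proof (cases "y \<ge> 0")
  case True
  let ?z = "2 * y"
  have "exp (?z/2) \<ge> 1 + ?z/2" by (rule exp_ge_add_one_self)
  then have "(exp (?z/2))\<^sup>2 \<ge> (1 + ?z/2)\<^sup>2" using True by (intro power_mono) auto
  moreover have "(exp (?z/2))\<^sup>2 = exp ?z" by (simp add: power2_eq_square exp_add[symmetric])
  moreover have "(1 + ?z/2)\<^sup>2 = 1 + ?z + y\<^sup>2" by (simp add: power2_eq_square field_simps)
  ultimately have "exp ?z \<ge> 1 + ?z + y\<^sup>2" by simp
  moreover have "(uu ?z)\<^sup>2 = 2 * exp ?z - 4 * y - 2" using uu_sq[of ?z] by simp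
  ultimately have "y\<^sup>2 \<le> (uu ?z)\<^sup>2" using zero_le_power2[of y] by linarith
  moreover have "0 \<le> uu ?z" using uu_pos[of ?z] True uu_0 by (cases "y = 0") auto
  ultimately have le: "y \<le> uu ?z" by (rule power2_le_imp_le)
  have "\<exists>x. 0 \<le> x \<and> x \<le> ?z \<and> uu x = y"
    by (rule IVT') (use True le uu_0 cont_uu in auto)
  then show ?thesis by blast
next
  case False
  let ?z = "- (y\<^sup>2 + 1)"
  have "exp ?z > 0" by simp
  then have "(- y)\<^sup>2 \<le> (- uu ?z)\<^sup>2" using uu_sq[of ?z] by simp
  moreover have "0 \<le> - uu ?z" using uu_neg[of ?z] zero_le_power2[of y] by linarith
  ultimately have "- y \<le> - uu ?z" by (rule power2_le_imp_le)
  then have le: "uu ?z \<le> y" by simp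
  have "?z \<le> 0" using zero_le_power2[of y] by linarith
  have "\<exists>x. ?z \<le> x \<and> x \<le> 0 \<and> uu x = y"
    by (rule IVT') (use False le uu_0 cont_uu \<open>?z \<le> 0\<close> in auto)
  then show ?thesis by blast
qed



definition psi :: "real \<Rightarrow> real" where "psi y = (THE x. uu x = y)"

lemma uu_psi: "uu (psi y) = y"
proof -
  have "\<exists>!x. uu x = y" using uu_surj uu_inj by blast
  then show ?thesis unfolding psi_def by (rule theI')
qed

lemma psi_uu: "psi (uu x) = x"
  using uu_psi uu_inj by blast

lemma psi_0: "psi 0 = 0"
  using psi_uu[of 0] uu_0 by simp

lemma isCont_psi: "isCont psi y"
proof -
  have "isCont psi (uu (psi y))"
    by (rule isCont_inverse_function[of 1]) (auto simp: psi_uu intro: DERIV_isCont[OF DERIV_uu])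
  then show ?thesis by (simp add: uu_psi)
qed

lemma u1_ne: "u1 x \<noteq> 0"
  using u1_pos[of x] by simp

definition gg :: "real \<Rightarrow> real" where "gg y = inverse (u1 (psi y))"

lemma DERIV_psi: "DERIV psi y :> gg y"
proof -
  have "DERIV psi y :> inverse (u1 (psi y))"
    by (rule DERIV_inverse_function[where f=uu and g=psi and x=y and a="y - 1" and b="y + 1"])
       (auto simp: uu_psi isCont_psi DERIV_uu u1_ne)
  then show ?thesis unfolding gg_def .
qed

lemma Cn_psi: "Cn n UNIV psi"
proof (induction n)
  case 0 then show ?case by (simp add: continuous_at_imp_continuous_on isCont_psi)
next
  case (Suc n)
  have "Cn n UNIV (\<lambda>y. inverse (u1 (psi y)))"
    by (rule Cn_inverse[OF Cn_compose[OF Cn_u1 Suc.IH]]) (auto simp: u1_ne)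
  then have "Cn n UNIV gg" unfolding gg_def[abs_def] .
  then show ?case using DERIV_psi by (auto simp: continuous_at_imp_continuous_on isCont_psi)
qed

lemma Cn_gg: "Cn n UNIV gg"
  unfolding gg_def[abs_def]
  by (rule Cn_inverse[OF Cn_compose[OF Cn_u1 Cn_psi]]) (auto simp: u1_ne)

lemma gg_pos: "gg y > 0"
  unfolding gg_def using u1_pos by simp

lemma gg_0: "gg 0 = 1"
  unfolding gg_def by (simp add: psi_0 u1_0)

lemma gg_id: "y = (exp (psi y) - 1) * gg y"
proof -
  have "u1 (psi y) * y = exp (psi y) - 1" using u1_rel[of "psi y"] by (simp add: uu_psi)
  then show ?thesis unfolding gg_def using u1_pos[of "psi y"] by (simp add: field_simps)
qed

definition g1 :: "real \<Rightarrow> real" where "g1 = deriv gg"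

lemma Cn_g1: "Cn n UNIV g1" and DERIV_gg: "DERIV gg x :> g1 x"
  using Cn_deriv[OF open_UNIV Cn_gg[of "Suc n"]] unfolding g1_def by auto

lemma g1_id: "1 = exp (psi y) * gg y * gg y + g1 y * (exp (psi y) - 1)"
proof -
  have de0: "DERIV (\<lambda>y. exp (psi y)) y :> exp (psi y) * gg y"
    by (rule DERIV_chain2[OF DERIV_exp DERIV_psi])
  have de: "DERIV (\<lambda>y. exp (psi y) - 1) y :> exp (psi y) * gg y"
    using DERIV_diff[OF de0 DERIV_const[of 1]] by simp
  have "DERIV (\<lambda>y. (exp (psi y) - 1) * gg y) y :> exp (psi y) * gg y * gg y + g1 y * (exp (psi y) - 1)"
    by (rule DERIV_mult[OF de DERIV_gg])
  moreover have "(\<lambda>y. (exp (psi y) - 1) * gg y) = (\<lambda>y. y)" using gg_id by auto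
  ultimately have "DERIV (\<lambda>y. y) y :> exp (psi y) * gg y * gg y + g1 y * (exp (psi y) - 1)" by simp
  then show ?thesis using DERIV_unique DERIV_ident by blast
qed

definition RR :: "real \<Rightarrow> real" where
  "RR p = (exp p)\<^sup>2 - 6 * exp p + 3 + 2 * exp (- p) + 6 * p"

lemma DERIV_RR: "DERIV RR x :> 2 * (exp x - 1) ^ 3 / exp x"
proof -
  have "DERIV RR x :> 2 * exp x * exp x - 6 * exp x + 2 * (exp (-x) * (- 1)) + 6"
    unfolding RR_def[abs_def] by (auto intro!: derivative_eq_intros simp: power2_eq_square)
  moreover have "2 * exp x * exp x - 6 * exp x + 2 * (exp (-x) * (- 1)) + 6 = 2 * (exp x - 1) ^ 3 / exp x"
    by (simp add: exp_minus field_simps power3_eq_cube power2_eq_square)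
  ultimately show ?thesis by simp
qed

lemma RR_pos: "p \<noteq> 0 \<Longrightarrow> RR p > 0"
proof -
  assume p: "p \<noteq> 0"
  have R0: "RR 0 = 0" unfolding RR_def by simp
  show ?thesis
  proof (cases "p > 0")
    case True
    then obtain z where z: "0 < z" "z < p" "RR p - RR 0 = (p - 0) * (2 * (exp z - 1) ^ 3 / exp z)"
      using MVT2[of 0 p RR "\<lambda>x. 2 * (exp x - 1) ^ 3 / exp x"] DERIV_RR by blast
    have "exp z - 1 > 0" using z by simp
    then have "2 * (exp z - 1) ^ 3 / exp z > 0" by simp
    then have "(p - 0) * (2 * (exp z - 1) ^ 3 / exp z) > 0" using True by (intro mult_pos_pos) auto
    then show ?thesis using z(3) R0 by linarith
  next
    case False
    then have pn: "p < 0" using p by simp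
    then obtain z where z: "p < z" "z < 0" "RR 0 - RR p = (0 - p) * (2 * (exp z - 1) ^ 3 / exp z)"
      using MVT2[of p 0 RR "\<lambda>x. 2 * (exp x - 1) ^ 3 / exp x"] DERIV_RR by blast
    have "exp z - 1 < 0" using z by simp
    then have "(exp z - 1) * (exp z - 1) > 0" by (intro mult_neg_neg)
    then have "(exp z - 1) * (exp z - 1) * (exp z - 1) < 0" using \<open>exp z - 1 < 0\<close> by (intro mult_pos_neg)
    then have "(exp z - 1) ^ 3 < 0" by (simp add: power3_eq_cube)
    then have "2 * (exp z - 1) ^ 3 / exp z < 0" by (simp add: divide_neg_pos)
    then have "(0 - p) * (2 * (exp z - 1) ^ 3 / exp z) < 0" by (intro mult_pos_neg) (use pn in simp_all)
    then show ?thesis using z(3) R0 by linarith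
  qed
qed

lemma g1_key: "y \<noteq> 0 \<Longrightarrow> (g1 y + 1/3) * y > 0"
proof -
  assume y: "y \<noteq> 0"
  define p where "p = psi y"
  define E where "E = exp p"
  define g where "g = gg y"
  define d where "d = g1 y"
  have p0: "p \<noteq> 0" using y uu_psi[of y] uu_0 unfolding p_def by auto
  have E1: "E \<noteq> 1" using p0 unfolding E_def by simp
  have Epos: "E > 0" unfolding E_def by simp
  have i1: "y = (E - 1) * g" using gg_id[of y] unfolding E_def p_def g_def .
  have i2: "1 = E * g * g + d * (E - 1)" using g1_id[of y] unfolding E_def p_def g_def d_def .
  have i3: "y\<^sup>2 = 2 * (E - p - 1)" using uu_sq[of p] uu_psi[of y] unfolding E_def p_def by simp
  have R: "RR p > 0" using RR_pos[OF p0] .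
  have RE: "E * RR p = E ^ 3 - 6 * E\<^sup>2 + 3 * E + 2 + 6 * p * E"
    unfolding RR_def E_def by (simp add: exp_minus field_simps power3_eq_cube power2_eq_square)
  have "(E - 1) ^ 3 * (d + 1/3) = (E - 1)\<^sup>2 * (d * (E - 1)) + (E - 1) ^ 3 / 3"
    by (simp add: field_simps power3_eq_cube power2_eq_square)
  also have "d * (E - 1) = 1 - E * g * g" using i2 by simp
  also have "(E - 1)\<^sup>2 * (1 - E * g * g) = (E - 1)\<^sup>2 - E * y\<^sup>2"
    by (simp only: i1) (simp add: algebra_simps power2_eq_square)
  also have "(E - 1)\<^sup>2 - E * y\<^sup>2 + (E - 1) ^ 3 / 3 = (E * RR p) / 3"
    unfolding RE i3 by (simp add: field_simps power3_eq_cube power2_eq_square)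
  finally have eqA: "(E - 1) ^ 3 * (d + 1/3) = (E * RR p) / 3" .
  have A: "(E - 1) ^ 3 * (d + 1/3) > 0" unfolding eqA using mult_pos_pos[OF Epos R] by simp
  have B: "y * (E - 1) > 0"
  proof -
    have p1: "(E - 1) * (E - 1) > 0" using E1 by (cases "E < 1") (auto simp: zero_less_mult_iff)
    have e2: "y * (E - 1) = g * ((E - 1) * (E - 1))" by (simp only: i1) (simp add: algebra_simps)
    have gpos: "g > 0" using gg_pos[of y] unfolding g_def .
    show ?thesis unfolding e2 by (rule mult_pos_pos[OF gpos p1])
  qed
  have "((E - 1) ^ 3 * (d + 1/3)) * (y * (E - 1)) > 0" using A B by simp
  moreover have "((E - 1) ^ 3 * (d + 1/3)) * (y * (E - 1)) = ((E - 1) ^ 3 * (E - 1)) * ((d + 1/3) * y)"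
    by (simp only: mult_ac)
  moreover have "(E - 1) ^ 3 * (E - 1) > 0"
  proof -
    have "(E - 1) * (E - 1) > 0" using E1 by (cases "E < 1") (auto simp: zero_less_mult_iff)
    then have "((E - 1) * (E - 1)) * ((E - 1) * (E - 1)) > 0" by simp
    then show ?thesis by (simp add: power3_eq_cube mult_ac)
  qed
  ultimately have "(d + 1/3) * y > 0" by (simp add: zero_less_mult_iff)
  then show ?thesis unfolding d_def .
qed

lemma gg_lower: "gg y \<ge> (\<bar>y\<bar> - y) / 2"
proof (cases "y < 0")
  case True
  define E where "E = exp (psi y)"
  have "psi y < 0" using True uu_psi[of y] uu_pos[of "psi y"] uu_0 by (metis linorder_neq_iff order_less_asym psi_0)
  then have "E < 1" "E > 0" unfolding E_def by auto
  have "- y = (1 - E) * gg y" using gg_id[of y] unfolding E_def by (simp add: algebra_simps)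
  also have "\<dots> \<le> gg y" using \<open>E > 0\<close> gg_pos[of y] by (simp add: mult_le_cancel_right1)
  finally show ?thesis using True by simp
next
  case False then show ?thesis using gg_pos[of y] by simp
qed



definition GG :: "real \<Rightarrow> real" where
  "GG a = integral {-(pi/2)..pi/2} (\<lambda>t. gg (a * sin t))"
definition G1 :: "real \<Rightarrow> real" where
  "G1 a = integral {-(pi/2)..pi/2} (\<lambda>t. sin t * g1 (a * sin t))"

lemma Cn_GG: "Cn n UNIV GG"
proof -
  have "Cn n UNIV (\<lambda>x. integral {-(pi/2)..pi/2} (\<lambda>t. 1 * gg (x * sin t)))"
    by (rule Cn_param[OF Cn_gg]) (auto intro: continuous_intros)
  then show ?thesis unfolding GG_def[abs_def] by simp
qed

lemma DERIV_GG: "DERIV GG a :> G1 a"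
proof -
  have "((\<lambda>x. integral {-(pi/2)..pi/2} (\<lambda>t. 1 * gg (x * sin t))) has_real_derivative
          integral {-(pi/2)..pi/2} (\<lambda>t. (1 * sin t) * g1 (a * sin t))) (at a)"
    by (rule param_int_deriv[OF DERIV_gg Cn_cont[OF Cn_g1[of 0]]]) (auto intro: continuous_intros)
  then show ?thesis unfolding GG_def[abs_def] G1_def by simp
qed

lemma cont_GG: "continuous_on S GG"
  using Cn_cont[OF Cn_GG[of 0]] continuous_on_subset by blast

lemma GG_0: "GG 0 = pi"
  unfolding GG_def by (simp add: gg_0)

lemma int_sin: "((\<lambda>t. sin t) has_integral 0) {-(pi/2)..pi/2}"
proof -
  have "((\<lambda>t. sin t) has_integral ((- cos (pi/2)) - (- cos (-(pi/2))))) {-(pi/2)..pi/2}"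
  proof (rule fundamental_theorem_of_calculus)
    fix t :: real
    have "((\<lambda>t. - cos t) has_real_derivative sin t) (at t)"
      by (auto intro!: derivative_eq_intros)
    then show "((\<lambda>t. - cos t) has_vector_derivative sin t) (at t within {-(pi/2)..pi/2})"
      by (simp add: has_real_derivative_iff_has_vector_derivative has_vector_derivative_at_within)
  qed simp
  then show ?thesis by simp
qed

lemma int_sin2: "((\<lambda>t. (sin t)\<^sup>2) has_integral pi/2) {-(pi/2)..pi/2}"
proof -
  let ?F = "\<lambda>t. t / 2 - sin t * cos t / 2"
  have "((\<lambda>t. (sin t)\<^sup>2) has_integral (?F (pi/2) - ?F (-(pi/2)))) {-(pi/2)..pi/2}"
  proof (rule fundamental_theorem_of_calculus)
    fix t :: real
    have "(?F has_real_derivative 1/2 - (cos t * cos t + (- sin t) * sin t) / 2) (at t)"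
      by (auto intro!: derivative_eq_intros)
    moreover have "1/2 - (cos t * cos t + (- sin t) * sin t) / 2 = (sin t)\<^sup>2"
      using sin_cos_squared_add[of t] by (simp add: power2_eq_square field_simps)
    ultimately have "(?F has_real_derivative (sin t)\<^sup>2) (at t)" by simp
    then show "(?F has_vector_derivative (sin t)\<^sup>2) (at t within {-(pi/2)..pi/2})"
      by (simp add: has_real_derivative_iff_has_vector_derivative has_vector_derivative_at_within)
  qed simp
  then show ?thesis by simp
qed

lemma G1_pos: "a > 0 \<Longrightarrow> G1 a > 0"
proof -
  assume a: "a > 0"
  let ?k = "\<lambda>t. sin t * (g1 (a * sin t) + 1/3)"
  have cg1: "continuous_on UNIV g1" using Cn_cont[OF Cn_g1[of 0]] .
  have ck: "continuous_on {-(pi/2)..pi/2} ?k"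
    by (intro continuous_intros continuous_on_compose2[OF cg1]) auto
  have c1: "continuous_on {-(pi/2)..pi/2} (\<lambda>t. sin t * g1 (a * sin t))"
    by (intro continuous_intros continuous_on_compose2[OF cg1]) auto
  have h1: "((\<lambda>t. sin t * g1 (a * sin t)) has_integral G1 a) {-(pi/2)..pi/2}"
    unfolding G1_def by (rule integrable_integral integrable_continuous_interval c1)+
  have h2: "((\<lambda>t. 1/3 * sin t) has_integral 1/3 * 0) {-(pi/2)..pi/2}"
    by (rule has_integral_mult_right[OF int_sin])
  have "((\<lambda>t. sin t * g1 (a * sin t) + 1/3 * sin t) has_integral (G1 a + 1/3 * 0)) {-(pi/2)..pi/2}"
    by (rule has_integral_add[OF h1 h2])
  moreover have "(\<lambda>t. sin t * g1 (a * sin t) + 1/3 * sin t) = ?k" by (auto simp: algebra_simps)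
  ultimately have hk: "(?k has_integral G1 a) {-(pi/2)..pi/2}" by simp
  have knn: "?k t \<ge> 0" for t
  proof (cases "a * sin t = 0")
    case True then show ?thesis using a by simp
  next
    case False
    have "(g1 (a * sin t) + 1/3) * (a * sin t) > 0" by (rule g1_key[OF False])
    then have "a * ?k t > 0" by (simp add: algebra_simps)
    then have "?k t > 0" using a zero_less_mult_pos by blast
    then show ?thesis by (rule less_imp_le)
  qed
  have "(g1 a + 1/3) * a > 0" using g1_key[of a] a by simp
  then have kpi: "?k (pi/2) > 0" using a by (simp add: zero_less_mult_iff)
  have "G1 a \<ge> 0" using has_integral_nonneg[OF hk] knn by blast
  moreover have "G1 a \<noteq> 0"
  proof
    assume "G1 a = 0"
    have ne: "box (-(pi/2)) (pi/2) \<noteq> {}"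
    proof -
      have "(0::real) \<in> box (-(pi/2)) (pi/2)" using pi_gt_zero by (simp add: box_real)
      then show ?thesis by blast
    qed
    have mem: "pi/2 \<in> cbox (-(pi/2)) (pi/2)" using pi_gt_zero by (simp add: cbox_interval)
    have "?k (pi/2) = 0"
      by (rule has_integral_0_cbox_imp_0[OF ck[folded cbox_interval] knn _ ne mem])
         (use hk \<open>G1 a = 0\<close> in \<open>simp add: cbox_interval\<close>)
    then show False using kpi by simp
  qed
  ultimately show ?thesis by simp
qed

lemma GG_less: "0 \<le> x \<Longrightarrow> x < y \<Longrightarrow> GG x < GG y"
proof -
  assume xy: "0 \<le> x" "x < y"
  then obtain z where z: "x < z" "z < y" "GG y - GG x = (y - x) * G1 z"
    using MVT2[of x y GG G1] DERIV_GG by blast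
  have "G1 z > 0" using G1_pos z xy by simp
  then have "(y - x) * G1 z > 0" using xy by simp
  then show ?thesis using z(3) by simp
qed

lemma GG_lower: "a > 0 \<Longrightarrow> GG a \<ge> a * pi / 4"
proof -
  assume a: "a > 0"
  let ?l = "\<lambda>t. (a * (sin t)\<^sup>2 - a * sin t) / 2"
  have hl: "(?l has_integral (a * (pi/2) - a * 0) / 2) {-(pi/2)..pi/2}"
    by (intro has_integral_divide has_integral_diff has_integral_mult_right int_sin2 int_sin)
  have cgg: "continuous_on UNIV gg" using Cn_cont[OF Cn_gg[of 0]] .
  have cg: "continuous_on {-(pi/2)..pi/2} (\<lambda>t. gg (a * sin t))"
    by (intro continuous_intros continuous_on_compose2[OF cgg]) auto
  have le: "?l t \<le> gg (a * sin t)" for t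
  proof -
    have s1: "\<bar>sin t\<bar> \<le> 1" by simp
    have e: "(sin t)\<^sup>2 = \<bar>sin t\<bar> * \<bar>sin t\<bar>" by (simp add: power2_eq_square)
    have "\<bar>sin t\<bar> * \<bar>sin t\<bar> \<le> \<bar>sin t\<bar> * 1" by (rule mult_left_mono[OF s1]) simp
    then have "(sin t)\<^sup>2 \<le> \<bar>sin t\<bar>" unfolding e by simp
    then have "a * (sin t)\<^sup>2 \<le> a * \<bar>sin t\<bar>" using a by (intro mult_left_mono) auto
    also have "a * \<bar>sin t\<bar> = \<bar>a * sin t\<bar>" using a by (simp add: abs_mult)
    finally show ?thesis using gg_lower[of "a * sin t"] by simp
  qed
  have "(a * (pi/2) - a * 0) / 2 \<le> GG a"
    unfolding GG_def
    by (rule has_integral_le[OF hl integrable_integral[OF integrable_continuous_interval[OF cg]]])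
       (use le in auto)
  then show ?thesis by simp
qed



lemma ff_uu: "ff x = 1 + (uu x)\<^sup>2 / 2"
  unfolding ff_def uu_sq by (simp add: field_simps)

lemma uu_mono: "x \<le> y \<Longrightarrow> uu x \<le> uu y"
  using uu_less by (cases "x = y") (auto simp: order_le_less)

lemma psi_less: "x < y \<Longrightarrow> psi x < psi y"
  by (metis linorder_not_less order_less_irrefl uu_mono uu_psi order.order_iff_strict)

lemma uu_nonpos: "x \<le> 0 \<Longrightarrow> uu x \<le> 0"
  using uu_neg uu_0 by (cases "x = 0") (auto simp: order_le_less)

lemma uu_nonneg: "x \<ge> 0 \<Longrightarrow> uu x \<ge> 0"
  using uu_pos uu_0 by (cases "x = 0") (auto simp: order_le_less)

lemma phi_lo_eq:
  assumes a: "a > 0"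
  shows "phi_lo (1 + a\<^sup>2 / 2) = psi (- a)"
proof -
  let ?P = "\<lambda>\<phi>. \<phi> \<le> 0 \<and> ff \<phi> = 1 + a\<^sup>2 / 2"
  have P: "?P (psi (- a))"
  proof
    show "psi (- a) \<le> 0"
    proof (rule ccontr)
      assume "\<not> psi (- a) \<le> 0"
      then have "uu (psi (- a)) > 0" using uu_pos by simp
      then show False using a by (simp add: uu_psi)
    qed
    show "ff (psi (- a)) = 1 + a\<^sup>2 / 2" by (simp add: ff_uu uu_psi)
  qed
  have U: "x = psi (- a)" if "?P x" for x
  proof -
    have "(uu x)\<^sup>2 = a\<^sup>2" using that by (simp add: ff_uu)
    then have "uu x = a \<or> uu x = - a" by (simp add: power2_eq_iff)
    moreover have "uu x \<le> 0" using that uu_nonpos by blast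
    ultimately have "uu x = - a" using a by auto
    then show ?thesis using psi_uu by metis
  qed
  have "\<exists>!x. ?P x" using P U by blast
  then show ?thesis unfolding phi_lo_def using P by (rule the1_equality)
qed

lemma phi_hi_eq:
  assumes a: "a > 0"
  shows "phi_hi (1 + a\<^sup>2 / 2) = psi a"
proof -
  let ?P = "\<lambda>\<phi>. \<phi> \<ge> 0 \<and> ff \<phi> = 1 + a\<^sup>2 / 2"
  have P: "?P (psi a)"
  proof
    show "psi a \<ge> 0"
    proof (rule ccontr)
      assume "\<not> psi a \<ge> 0"
      then have "uu (psi a) < 0" using uu_neg by simp
      then show False using a by (simp add: uu_psi)
    qed
    show "ff (psi a) = 1 + a\<^sup>2 / 2" by (simp add: ff_uu uu_psi)
  qed
  have U: "x = psi a" if "?P x" for x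
  proof -
    have "(uu x)\<^sup>2 = a\<^sup>2" using that by (simp add: ff_uu)
    then have "uu x = a \<or> uu x = - a" by (simp add: power2_eq_iff)
    moreover have "uu x \<ge> 0" using that uu_nonneg by blast
    ultimately have "uu x = a" using a by auto
    then show ?thesis using psi_uu by metis
  qed
  have "\<exists>!x. ?P x" using P U by blast
  then show ?thesis unfolding phi_hi_def using P by (rule the1_equality)
qed

lemma beta_eq_a:
  assumes a: "a > 0"
  shows "beta (1 + a\<^sup>2 / 2) = GG a / sqrt 2"
proof -
  define f0 where "f0 = 1 + a\<^sup>2 / 2"
  define lo where "lo = psi (- a)"
  define hi where "hi = psi a"
  have lohi: "lo < hi" unfolding lo_def hi_def using a by (intro psi_less) simp
  have ulo: "uu lo = - a" and uhi: "uu hi = a" unfolding lo_def hi_def by (simp_all add: uu_psi)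
  define \<Theta> where "\<Theta> = (\<lambda>\<phi>. arcsin (uu \<phi> / a))"
  define \<Theta>' where "\<Theta>' = (\<lambda>\<phi>. inverse (sqrt (1 - (uu \<phi> / a)\<^sup>2)) * (u1 \<phi> / a))"
  define F where "F = (\<lambda>\<theta>. gg (a * sin \<theta>))"
  have bnd: "- 1 \<le> uu \<phi> / a \<and> uu \<phi> / a \<le> 1" if "\<phi> \<in> {lo..hi}" for \<phi>
  proof -
    have "uu lo \<le> uu \<phi>" "uu \<phi> \<le> uu hi" using that uu_mono by auto
    then show ?thesis using a ulo uhi by (simp add: field_simps)
  qed
  have bnd2: "- 1 < uu \<phi> / a \<and> uu \<phi> / a < 1" if "\<phi> \<in> {lo<..<hi}" for \<phi>
  proof -
    have "uu lo < uu \<phi>" "uu \<phi> < uu hi" using that uu_less by auto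
    then show ?thesis using a ulo uhi by (simp add: field_simps)
  qed
  have cgg: "continuous_on UNIV gg" using Cn_cont[OF Cn_gg[of 0]] .
  have cF: "continuous_on {-(pi/2)..pi/2} F"
    unfolding F_def by (intro continuous_intros continuous_on_compose2[OF cgg]) auto
  have cT: "continuous_on {lo..hi} \<Theta>"
    unfolding \<Theta>_def
    by (rule continuous_on_arcsin) (use bnd a in \<open>auto intro!: continuous_intros cont_uu\<close>)
  have sub: "\<Theta> ` {lo..hi} \<subseteq> {-(pi/2)..pi/2}"
    unfolding \<Theta>_def using bnd arcsin_bounded by fastforce
  have dT: "(\<Theta> has_field_derivative \<Theta>' \<phi>) (at \<phi> within {lo..hi})" if "\<phi> \<in> {lo..hi} - {lo, hi}" for \<phi>
  proof -
    have "\<phi> \<in> {lo<..<hi}" using that by auto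
    then have b: "- 1 < uu \<phi> / a" "uu \<phi> / a < 1" using bnd2 by auto
    have d1: "DERIV (\<lambda>\<phi>. uu \<phi> / a) \<phi> :> u1 \<phi> / a"
      using DERIV_cdivide[OF DERIV_uu, of a] by simp
    have "DERIV \<Theta> \<phi> :> \<Theta>' \<phi>"
      unfolding \<Theta>_def \<Theta>'_def by (rule DERIV_chain2[OF DERIV_arcsin[OF b] d1])
    then show ?thesis by (rule has_field_derivative_at_within)
  qed
  have S: "((\<lambda>\<phi>. \<Theta>' \<phi> *\<^sub>R F (\<Theta> \<phi>)) has_integral
      (integral {\<Theta> lo..\<Theta> hi} F - integral {\<Theta> hi..\<Theta> lo} F)) {lo..hi}"
    by (rule has_integral_substitution_general[where s="{lo, hi}", OF _ _ sub cF cT dT]) (use lohi in auto)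
  have Tlo: "\<Theta> lo = -(pi/2)" and Thi: "\<Theta> hi = pi/2" unfolding \<Theta>_def using a ulo uhi by simp_all
  have "integral {\<Theta> hi..\<Theta> lo} F = 0" unfolding Tlo Thi using pi_gt_zero by simp
  then have S2: "((\<lambda>\<phi>. \<Theta>' \<phi> * F (\<Theta> \<phi>)) has_integral GG a) {lo..hi}"
    using S unfolding Tlo Thi GG_def F_def by simp
  have S3: "((\<lambda>\<phi>. sqrt 2 * (\<Theta>' \<phi> * F (\<Theta> \<phi>))) has_integral sqrt 2 * GG a) {lo..hi}"
    by (rule has_integral_mult_right[OF S2])
  have pt: "1 / sqrt (f0 - ff \<phi>) = sqrt 2 * (\<Theta>' \<phi> * F (\<Theta> \<phi>))" if "\<phi> \<in> {lo..hi} - {lo, hi}" for \<phi>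
  proof -
    define v where "v = uu \<phi>"
    have "\<phi> \<in> {lo<..<hi}" using that by auto
    then have b: "- 1 < v / a" "v / a < 1" using bnd2 unfolding v_def by auto
    have "- a < v" "v < a" using b a by (simp_all add: field_simps)
    then have "\<bar>v\<bar> < a" by simp
    then have "\<bar>v\<bar>\<^sup>2 < a\<^sup>2" by (intro power_strict_mono) auto
    then have vb: "v\<^sup>2 < a\<^sup>2" by simp
    have s: "sin (arcsin (uu \<phi> / a)) = uu \<phi> / a" using b unfolding v_def by (intro sin_arcsin) auto
    have F1: "F (\<Theta> \<phi>) = inverse (u1 \<phi>)"
      unfolding F_def \<Theta>_def gg_def s using a by (simp add: psi_uu)
    have Q: "a\<^sup>2 - v\<^sup>2 > 0" using vb by simp
    have e1: "f0 - ff \<phi> = (a\<^sup>2 - v\<^sup>2) / 2" unfolding f0_def v_def ff_uu by simp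
    have e2: "sqrt (1 - (v / a)\<^sup>2) = sqrt (a\<^sup>2 - v\<^sup>2) / a"
    proof -
      have "1 - (v / a)\<^sup>2 = (a\<^sup>2 - v\<^sup>2) / a\<^sup>2" using a by (simp add: field_simps)
      then show ?thesis using a by (simp add: real_sqrt_divide)
    qed
    have sq: "sqrt (a\<^sup>2 - v\<^sup>2) > 0" using Q by simp
    have "1 / sqrt (f0 - ff \<phi>) = sqrt 2 / sqrt (a\<^sup>2 - v\<^sup>2)"
      unfolding e1 by (simp add: real_sqrt_divide)
    also have "\<dots> = sqrt 2 * (\<Theta>' \<phi> * F (\<Theta> \<phi>))"
      unfolding F1 \<Theta>'_def v_def[symmetric] e2 using a sq u1_ne[of \<phi>] by (simp add: field_simps)
    finally show ?thesis .
  qed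
  have "((\<lambda>\<phi>. 1 / sqrt (f0 - ff \<phi>)) has_integral sqrt 2 * GG a) {lo..hi}"
    by (rule has_integral_spike_finite[OF _ _ S3, of "{lo, hi}"]) (use pt in auto)
  then have "integral {lo..hi} (\<lambda>\<phi>. 1 / sqrt (f0 - ff \<phi>)) = sqrt 2 * GG a" by (rule integral_unique)
  moreover have "phi_lo f0 = lo" "phi_hi f0 = hi"
    unfolding f0_def lo_def hi_def using phi_lo_eq[OF a] phi_hi_eq[OF a] by auto
  ultimately have "beta f0 = 1/2 * (sqrt 2 * GG a)" unfolding beta_def by simp
  also have "\<dots> = GG a / sqrt 2" by (simp add: field_simps)
  finally show ?thesis unfolding f0_def .
qed



lemma beta_eq:
  assumes x: "x > 1"
  shows "beta x = inverse (sqrt 2) * GG (sqrt (2 * (x - 1)))"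
proof -
  define a where "a = sqrt (2 * (x - 1))"
  have a: "a > 0" unfolding a_def using x by simp
  have "a\<^sup>2 = 2 * (x - 1)" unfolding a_def using x by simp
  then have "x = 1 + a\<^sup>2 / 2" by (simp add: field_simps)
  then have "beta x = GG a / sqrt 2" using beta_eq_a[OF a] by simp
  then show ?thesis unfolding a_def by (simp add: field_simps)
qed

lemma Cn_beta: "Cn n {1<..} beta"
proof -
  have c1: "Cn n {1<..} (\<lambda>x. 2 * (x + (- 1)))"
    by (rule Cn_mult[OF Cn_const Cn_add[OF Cn_id Cn_const]])
  have c2: "Cn n {1<..} (\<lambda>x. sqrt (2 * (x + (- 1))))"
    by (rule Cn_compose[OF Cn_sqrt c1]) auto
  have c3: "Cn n {1<..} (\<lambda>x. GG (sqrt (2 * (x + (- 1)))))"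
    by (rule Cn_compose[OF Cn_GG c2]) auto
  have c4: "Cn n {1<..} (\<lambda>x. inverse (sqrt 2) * GG (sqrt (2 * (x + (- 1)))))"
    by (rule Cn_mult[OF Cn_const c3])
  show ?thesis
    by (rule Cn_cong[OF _ _ c4]) (auto simp: beta_eq)
qed

lemma DERIV_beta:
  assumes x: "x > 1"
  shows "DERIV beta x :> inverse (sqrt 2) * (G1 (sqrt (2 * (x - 1))) * (inverse (sqrt (2 * (x - 1))) / 2 * 2))"
proof -
  have d0: "DERIV (\<lambda>x. 2 * (x - 1)) x :> 2" by (auto intro!: derivative_eq_intros)
  have d1: "DERIV (\<lambda>x. sqrt (2 * (x - 1))) x :> inverse (sqrt (2 * (x - 1))) / 2 * 2"
    by (rule DERIV_chain2[OF DERIV_real_sqrt d0]) (use x in simp)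
  have d2: "DERIV (\<lambda>x. GG (sqrt (2 * (x - 1)))) x :> G1 (sqrt (2 * (x - 1))) * (inverse (sqrt (2 * (x - 1))) / 2 * 2)"
    by (rule DERIV_chain2[OF DERIV_GG d1])
  have d3: "DERIV (\<lambda>x. inverse (sqrt 2) * GG (sqrt (2 * (x - 1)))) x :>
       inverse (sqrt 2) * (G1 (sqrt (2 * (x - 1))) * (inverse (sqrt (2 * (x - 1))) / 2 * 2))"
    by (rule DERIV_cmult[OF d2])
  show ?thesis
    by (rule has_field_derivative_transform_within_open[OF d3, of "{1<..}"]) (use x beta_eq in auto)
qed

theorem proposition2p2:
  shows "(\<forall>n. \<forall>x\<in>{1<..}. ((deriv ^^ n) beta) differentiable (at x))
    \<and> bij_betw beta {1<..} {pi / sqrt 2<..}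
    \<and> (\<forall>x\<in>{1<..}. deriv beta x > 0)"
proof (intro conjI allI ballI)
  fix n :: nat and x :: real
  assume "x \<in> {1<..}"
  then show "((deriv ^^ n) beta) differentiable (at x)"
    using Cn_higher[OF open_greaterThan Cn_beta] by blast
next
  fix x :: real
  assume "x \<in> {1<..}"
  then have x: "x > 1" by simp
  have "deriv beta x = inverse (sqrt 2) * (G1 (sqrt (2 * (x - 1))) * (inverse (sqrt (2 * (x - 1))) / 2 * 2))"
    by (rule DERIV_imp_deriv[OF DERIV_beta[OF x]])
  moreover have "G1 (sqrt (2 * (x - 1))) > 0" using x by (intro G1_pos) simp
  ultimately show "deriv beta x > 0" using x by simp
next
  have mono: "beta x < beta y" if "x \<in> {1<..}" "y \<in> {1<..}" "x < y" for x y
  proof -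
    have "sqrt (2 * (x - 1)) < sqrt (2 * (y - 1))" using that by (intro real_sqrt_less_mono) simp
    then have "GG (sqrt (2 * (x - 1))) < GG (sqrt (2 * (y - 1)))" using that by (intro GG_less) auto
    then show ?thesis using that by (simp add: beta_eq)
  qed
  have inj: "inj_on beta {1<..}"
  proof (rule inj_onI)
    fix x y assume "x \<in> {1<..}" "y \<in> {1<..}" "beta x = beta y"
    then show "x = y" using mono[of x y] mono[of y x] by (cases x y rule: linorder_cases) auto
  qed
  have img1: "beta ` {1<..} \<subseteq> {pi / sqrt 2<..}"
  proof
    fix z assume "z \<in> beta ` {1<..}"
    then obtain x where x: "x > 1" "z = beta x" by auto
    have "GG 0 < GG (sqrt (2 * (x - 1)))" using x by (intro GG_less) auto
    then have "pi < GG (sqrt (2 * (x - 1)))" by (simp add: GG_0)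
    then have "pi / sqrt 2 < GG (sqrt (2 * (x - 1))) / sqrt 2" by (simp add: divide_strict_right_mono)
    then show "z \<in> {pi / sqrt 2<..}" using x by (simp add: beta_eq field_simps)
  qed
  have img2: "{pi / sqrt 2<..} \<subseteq> beta ` {1<..}"
  proof
    fix y assume "y \<in> {pi / sqrt 2<..}"
    then have y: "pi / sqrt 2 < y" by simp
    define Y where "Y = y * sqrt 2"
    have Y: "pi < Y" using y unfolding Y_def by (simp add: field_simps)
    define M where "M = 4 * Y / pi"
    have "Y > 0" using Y pi_gt_zero by linarith
    then have Mpos: "M > 0" unfolding M_def using pi_gt_zero by simp
    have "GG M \<ge> M * pi / 4" by (rule GG_lower[OF Mpos])
    then have "Y \<le> GG M" unfolding M_def by simp
    moreover have "GG 0 \<le> Y" using Y by (simp add: GG_0)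
    ultimately obtain a where a: "0 \<le> a" "a \<le> M" "GG a = Y"
      using IVT'[of GG 0 Y M] Mpos cont_GG by auto
    have "a \<noteq> 0" using a Y by (auto simp: GG_0)
    then have apos: "a > 0" using a by simp
    have "beta (1 + a\<^sup>2 / 2) = Y / sqrt 2" using beta_eq_a[OF apos] a by simp
    also have "\<dots> = y" unfolding Y_def by simp
    finally have "beta (1 + a\<^sup>2 / 2) = y" .
    moreover have "1 + a\<^sup>2 / 2 \<in> {1<..}" using apos by simp
    ultimately show "y \<in> beta ` {1<..}" by (metis image_eqI)
  qed
  show "bij_betw beta {1<..} {pi / sqrt 2<..}"
    unfolding bij_betw_def using inj img1 img2 by blast
qed


end
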